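(* Let $\phi$ be a reflexive $(\sigma,\varepsilon)$-sesquilinear form on a right vector space $V$ over a division ring $K$, not identically zero, and suppose there exists a nonzero isotropic vector. Then $V$ is spanned by its isotropic vectors if and only if both (a) $\phi$ is trace-valued, and (b) there exists an isotropic vector not contained in $\mathrm{Rad}(\phi)$.
   Context: Let $K$ be a division ring, $\sigma$ an anti-automorphism of $K$ and $\varepsilon\in K^*$ with $\varepsilon^{\sigma}=\varepsilon^{-1}$ and $t^{\sigma^2}=\varepsilon t\varepsilon^{-1}$ for all $t\in K$. For a right $K$-vector space $V$, a reflexive $(\sigma,\varepsilon)$-sesquilinear form is a map $\phi:V\times V\to K$ with $\phi(x,y\alpha+z\beta)=\phi(x,y)\alpha+\phi(x,z)\beta$ and $\phi(y,x)=\phi(x,y)^{\sigma}\varepsilon$ for all $x,y,z\in V$, $\alpha,\beta\in K$. A vector $a$ is isotropic if $\phi(a,a)=0$. $\mathrm{Rad}(\phi)=\{a\in V:\phi(a,x)=0\ \forall x\in V\}$. The form $\phi$ is trace-valued if $\phi(x,x)\in\{t+t^{\sigma}\varepsilon: t\in K\}$ for every $x\in V$. *)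

theory Defs
  imports Main
begin

text \<open>A right vector space: the type 'v (an abelian group) with a right scalar
  multiplication by the division ring 'k, written smul x a for x a.\<close>
definition right_vector_space :: "('v::ab_group_add \<Rightarrow> 'k::division_ring \<Rightarrow> 'v) \<Rightarrow> bool" where
  "right_vector_space smul \<longleftrightarrow>
     (\<forall>x y a. smul (x + y) a = smul x a + smul y a) \<and>
     (\<forall>x a b. smul x (a + b) = smul x a + smul x b) \<and>
     (\<forall>x a b. smul x (a * b) = smul (smul x a) b) \<and>
     (\<forall>x. smul x 1 = x)"

definition anti_automorphism :: "('k::division_ring \<Rightarrow> 'k) \<Rightarrow> bool" where
  "anti_automorphism \<sigma> \<longleftrightarrow> bij \<sigma> \<and>
     (\<forall>a b. \<sigma> (a + b) = \<sigma> a + \<sigma> b) \<and>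
     (\<forall>a b. \<sigma> (a * b) = \<sigma> b * \<sigma> a)"

definition admissible_pair :: "('k::division_ring \<Rightarrow> 'k) \<Rightarrow> 'k \<Rightarrow> bool" where
  "admissible_pair \<sigma> \<epsilon> \<longleftrightarrow> anti_automorphism \<sigma> \<and> \<epsilon> \<noteq> 0 \<and>
     \<sigma> \<epsilon> = inverse \<epsilon> \<and> (\<forall>t. \<sigma> (\<sigma> t) = \<epsilon> * t * inverse \<epsilon>)"

definition refl_sesq_form ::
  "('v::ab_group_add \<Rightarrow> 'k::division_ring \<Rightarrow> 'v) \<Rightarrow> ('k \<Rightarrow> 'k) \<Rightarrow> 'k \<Rightarrow> ('v \<Rightarrow> 'v \<Rightarrow> 'k) \<Rightarrow> bool" where
  "refl_sesq_form smul \<sigma> \<epsilon> \<phi> \<longleftrightarrow>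
     (\<forall>x y z \<alpha> \<beta>. \<phi> x (smul y \<alpha> + smul z \<beta>) = \<phi> x y * \<alpha> + \<phi> x z * \<beta>) \<and>
     (\<forall>x y. \<phi> y x = \<sigma> (\<phi> x y) * \<epsilon>)"

definition isotropic :: "('v \<Rightarrow> 'v \<Rightarrow> 'k::zero) \<Rightarrow> 'v \<Rightarrow> bool" where
  "isotropic \<phi> a \<longleftrightarrow> \<phi> a a = 0"

definition Rad :: "('v \<Rightarrow> 'v \<Rightarrow> 'k::zero) \<Rightarrow> 'v set" where
  "Rad \<phi> = {a. \<forall>x. \<phi> a x = 0}"

definition trace_valued :: "('k::division_ring \<Rightarrow> 'k) \<Rightarrow> 'k \<Rightarrow> ('v \<Rightarrow> 'v \<Rightarrow> 'k) \<Rightarrow> bool" where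
  "trace_valued \<sigma> \<epsilon> \<phi> \<longleftrightarrow> (\<forall>x. \<phi> x x \<in> {t + \<sigma> t * \<epsilon> | t. True})"

inductive_set rspan :: "('v::ab_group_add \<Rightarrow> 'k \<Rightarrow> 'v) \<Rightarrow> 'v set \<Rightarrow> 'v set"
  for smul :: "'v \<Rightarrow> 'k \<Rightarrow> 'v" and S :: "'v set" where
  rspan_zero: "0 \<in> rspan smul S"
| rspan_base: "x \<in> S \<Longrightarrow> x \<in> rspan smul S"
| rspan_add: "x \<in> rspan smul S \<Longrightarrow> y \<in> rspan smul S \<Longrightarrow> x + y \<in> rspan smul S"
| rspan_smul: "x \<in> rspan smul S \<Longrightarrow> smul x a \<in> rspan smul S"

end

theory Submission
  imports Defs
begin

lemma sm_facts:
  assumes "right_vector_space smul"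
  shows "smul (y::'v::ab_group_add) (0::'k::division_ring) = 0" and "smul y (-a) = - smul y a"
    and "smul x 1 = x" and "smul (x+y) b = smul x b + smul y b"
proof -
  have A: "\<And>x a b. smul x (a + b) = smul x a + smul x b" using assms unfolding right_vector_space_def by blast
  have "smul y (0+0) = smul y 0 + smul y 0" by (rule A)
  thus z: "smul y 0 = 0" by simp
  have "smul y (a + -a) = smul y a + smul y (-a)" by (rule A)
  with z show "smul y (-a) = - smul y a" by (simp add: eq_neg_iff_add_eq_0 add.commute)
  show "smul x 1 = x" "smul (x+y) b = smul x b + smul y b" using assms unfolding right_vector_space_def by blast+
qed

lemma sig_facts:
  assumes "admissible_pair \<sigma> (\<epsilon>::'k::division_ring)"
  shows "\<sigma> 0 = 0" "\<sigma> (a+b) = \<sigma> a + \<sigma> b" "\<sigma> (a*b) = \<sigma> b * \<sigma> a" "\<sigma> (-a) = - \<sigma> a"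
    "\<sigma> (\<sigma> t) = \<epsilon> * t * inverse \<epsilon>" "\<epsilon> \<noteq> 0" "\<sigma> a = 0 \<longleftrightarrow> a = 0"
proof -
  have add: "\<And>a b. \<sigma> (a+b) = \<sigma> a + \<sigma> b" using assms unfolding admissible_pair_def anti_automorphism_def by blast
  show "\<sigma> (a+b) = \<sigma> a + \<sigma> b" by (rule add)
  have "\<sigma> (0+0) = \<sigma> 0 + \<sigma> 0" by (rule add)
  thus z: "\<sigma> 0 = 0" by simp
  have "\<sigma> (a + -a) = \<sigma> a + \<sigma> (-a)" by (rule add)
  with z show "\<sigma> (-a) = - \<sigma> a" by (simp add: eq_neg_iff_add_eq_0 add.commute)
  show "\<sigma> (a*b) = \<sigma> b * \<sigma> a" "\<sigma> (\<sigma> t) = \<epsilon> * t * inverse \<epsilon>" "\<epsilon> \<noteq> 0"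
    using assms unfolding admissible_pair_def anti_automorphism_def by blast+
  have "inj \<sigma>" using assms unfolding admissible_pair_def anti_automorphism_def bij_def by blast
  with z show "\<sigma> a = 0 \<longleftrightarrow> a = 0" by (metis injD)
qed

lemma phi_facts:
  assumes V: "right_vector_space smul" and P: "admissible_pair \<sigma> \<epsilon>"
    and F: "refl_sesq_form smul \<sigma> \<epsilon> \<phi>"
  shows "\<phi> x (y+z) = \<phi> x y + \<phi> x z" "\<phi> x (smul y \<alpha>) = \<phi> x y * \<alpha>"
    "\<phi> (y+z) x = \<phi> y x + \<phi> z x" "\<phi> (smul y \<alpha>) x = \<sigma> \<alpha> * \<phi> y x"
    "\<phi> y x = \<sigma> (\<phi> x y) * \<epsilon>" "\<phi> x 0 = 0" "\<phi> 0 x = 0"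
proof -
  have L: "\<And>x y z \<alpha> \<beta>. \<phi> x (smul y \<alpha> + smul z \<beta>) = \<phi> x y * \<alpha> + \<phi> x z * \<beta>"
   and S: "\<And>x y. \<phi> y x = \<sigma> (\<phi> x y) * \<epsilon>" using F unfolding refl_sesq_form_def by blast+
  show a1: "\<And>x y z. \<phi> x (y+z) = \<phi> x y + \<phi> x z" using L[of _ _ 1 _ 1] sm_facts(3)[OF V] by simp
  show a2: "\<And>x y \<alpha>. \<phi> x (smul y \<alpha>) = \<phi> x y * \<alpha>" using L[of _ _ _ _ 0] sm_facts(1)[OF V] by simp
  show "\<phi> y x = \<sigma> (\<phi> x y) * \<epsilon>" by (rule S)
  show "\<phi> (y+z) x = \<phi> y x + \<phi> z x" using S a1 sig_facts[OF P] by (metis distrib_right)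
  show "\<phi> (smul y \<alpha>) x = \<sigma> \<alpha> * \<phi> y x" using S a2 sig_facts[OF P] by (metis mult.assoc)
  have "\<phi> x (0+0) = \<phi> x 0 + \<phi> x 0" by (rule a1)
  thus z: "\<phi> x 0 = 0" by simp
  show "\<phi> 0 x = 0" using S[of x 0] z sig_facts[OF P] by simp
qed

theorem mainTheorem4:
  fixes smul :: "'v::ab_group_add \<Rightarrow> 'k::division_ring \<Rightarrow> 'v"
    and \<sigma> :: "'k \<Rightarrow> 'k" and \<epsilon> :: 'k and \<phi> :: "'v \<Rightarrow> 'v \<Rightarrow> 'k"
  assumes "right_vector_space smul"
    and "admissible_pair \<sigma> \<epsilon>"
    and "refl_sesq_form smul \<sigma> \<epsilon> \<phi>"
    and "\<exists>x y. \<phi> x y \<noteq> 0"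
    and "\<exists>a. a \<noteq> 0 \<and> isotropic \<phi> a"
  shows "rspan smul {a. isotropic \<phi> a} = UNIV \<longleftrightarrow>
         (trace_valued \<sigma> \<epsilon> \<phi> \<and> (\<exists>a. isotropic \<phi> a \<and> a \<notin> Rad \<phi>))"
proof
  note S = sig_facts[OF assms(2)]
  note Ph = phi_facts[OF assms(1-3)]
  define T where "T = {t + \<sigma> t * \<epsilon> | t. True}"
  assume sp: "rspan smul {a. isotropic \<phi> a} = UNIV"
  have TV: "\<phi> x x \<in> T" if "x \<in> rspan smul {a. isotropic \<phi> a}" for x
    using that
  proof induction
    case rspan_zero
    then show ?case unfolding T_def using Ph(6,7) S by (auto intro!: exI[of _ 0])
  next
    case (rspan_base x)
    then show ?case unfolding T_def isotropic_def using S by (auto intro!: exI[of _ 0])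
  next
    case (rspan_add x y)
    then obtain t1 t2 where t: "\<phi> x x = t1 + \<sigma> t1 * \<epsilon>" "\<phi> y y = t2 + \<sigma> t2 * \<epsilon>" unfolding T_def by blast
    have "\<phi> (x+y) (x+y) = \<phi> x x + \<phi> y y + (\<phi> x y + \<phi> y x)"
      by (simp only: Ph(1,3) ac_simps)
    also have "\<dots> = (t1 + \<sigma> t1 * \<epsilon>) + (t2 + \<sigma> t2 * \<epsilon>) + (\<phi> x y + \<sigma> (\<phi> x y) * \<epsilon>)"
      by (simp only: t Ph(5)[of y x])
    also have "\<dots> = (t1 + t2 + \<phi> x y) + \<sigma> (t1 + t2 + \<phi> x y) * \<epsilon>"
      by (simp only: S(2) distrib_right ac_simps)
    finally have "\<phi> (x+y) (x+y) = (t1 + t2 + \<phi> x y) + \<sigma> (t1 + t2 + \<phi> x y) * \<epsilon>" .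
    then show ?case unfolding T_def by blast
  next
    case (rspan_smul x a)
    then obtain t where t: "\<phi> x x = t + \<sigma> t * \<epsilon>" unfolding T_def by blast
    have e: "\<sigma> (\<sigma> a) * \<epsilon> = \<epsilon> * a" using S(5)[of a] S(6) by (simp add: mult.assoc)
    have "\<phi> (smul x a) (smul x a) = \<sigma> a * \<phi> x x * a" using Ph(2,4) by (simp add: mult.assoc)
    also have "\<dots> = \<sigma> a * t * a + \<sigma> a * \<sigma> t * (\<epsilon> * a)" using t by (simp add: algebra_simps)
    also have "\<dots> = (\<sigma> a * t * a) + \<sigma> (\<sigma> a * t * a) * \<epsilon>" using S(3) e by (simp add: mult.assoc)
    finally show ?case unfolding T_def by blast
  qed
  show "trace_valued \<sigma> \<epsilon> \<phi> \<and> (\<exists>a. isotropic \<phi> a \<and> a \<notin> Rad \<phi>)"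
  proof
    show "trace_valued \<sigma> \<epsilon> \<phi>" unfolding trace_valued_def using TV sp T_def by auto
    show "\<exists>a. isotropic \<phi> a \<and> a \<notin> Rad \<phi>"
    proof (rule ccontr)
      assume "\<not> ?thesis"
      hence h: "\<And>a. isotropic \<phi> a \<Longrightarrow> a \<in> Rad \<phi>" by blast
      have R: "x \<in> Rad \<phi>" if "x \<in> rspan smul {a. isotropic \<phi> a}" for x
        using that
      proof induction
        case rspan_zero then show ?case unfolding Rad_def using Ph(1-4,6,7) by simp
      next
        case (rspan_base x) then show ?case using h by blast
      next
        case (rspan_add x y) then show ?case unfolding Rad_def using Ph(1-4,6,7) by simp
      next
        case (rspan_smul x a) then show ?case unfolding Rad_def using Ph(1-4,6,7) by simp
      qed
      obtain x y where "\<phi> x y \<noteq> 0" using assms(4) by blast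
      moreover have "x \<in> Rad \<phi>" using R sp by blast
      ultimately show False unfolding Rad_def by blast
    qed
  qed
next
  note S = sig_facts[OF assms(2)]
  note Ph = phi_facts[OF assms(1-3)]
  note M = sm_facts[OF assms(1)]
  let ?W = "rspan smul {a. isotropic \<phi> a}"
  assume "trace_valued \<sigma> \<epsilon> \<phi> \<and> (\<exists>a. isotropic \<phi> a \<and> a \<notin> Rad \<phi>)"
  then obtain a where tv: "trace_valued \<sigma> \<epsilon> \<phi>" and ai: "\<phi> a a = 0" and ar: "a \<notin> Rad \<phi>"
    unfolding isotropic_def by blast
  have aW: "a \<in> ?W" using ai by (auto intro: rspan_base simp: isotropic_def)
  have key: "v \<in> ?W" if nz: "\<phi> a v \<noteq> 0" for v
  proof -
    obtain t where t: "\<phi> v v = t + \<sigma> t * \<epsilon>" using tv unfolding trace_valued_def by blast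
    define c where "c = \<phi> v a"
    have ca: "\<phi> a v = \<sigma> c * \<epsilon>" unfolding c_def by (rule Ph(5))
    have cnz: "c \<noteq> 0" using nz ca S by auto
    define l where "l = - (inverse c * t)"
    have cl: "c * l = - t" using cnz unfolding l_def by (simp add: mult.assoc[symmetric])
    have "\<phi> (v + smul a l) (v + smul a l) = \<phi> v v + c * l + \<sigma> l * (\<sigma> c * \<epsilon>) + \<sigma> l * \<phi> a a * l"
      using Ph(1-4) ca c_def by (simp add: algebra_simps)
    also have "\<dots> = \<phi> v v + c * l + \<sigma> (c * l) * \<epsilon>" using ai S(3) by (simp add: mult.assoc)
    also have "\<dots> = 0" using t cl S(4) by simp
    finally have "v + smul a l \<in> ?W" by (auto intro: rspan_base simp: isotropic_def)
    moreover have "smul a (-l) \<in> ?W" using aW by (rule rspan_smul)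
    ultimately have "(v + smul a l) + smul a (-l) \<in> ?W" by (rule rspan_add)
    thus ?thesis using M(2) by simp
  qed
  obtain x where x: "\<phi> a x \<noteq> 0" using ar unfolding Rad_def by blast
  show "?W = UNIV"
  proof (rule set_eqI, rule iffI)
    fix v show "v \<in> UNIV" by simp
  next
    fix v
    show "v \<in> ?W"
    proof (cases "\<phi> a v = 0")
      case False then show ?thesis by (rule key)
    next
      case True
      have xW: "x \<in> ?W" by (rule key[OF x])
      have "v + x \<in> ?W" by (rule key) (use True x Ph(1) in simp)
      moreover have "smul x (-1) \<in> ?W" using xW by (rule rspan_smul)
      ultimately have "(v + x) + smul x (-1) \<in> ?W" by (rule rspan_add)
      thus ?thesis using M(2)[of x 1] M(3) by simp
    qed
  qed
qed

end
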